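(* Let $\Omega_n=\dfrac{\pi^{n/2}}{\Gamma\left(\frac n2+1\right)}$ for $n\in\mathbb{N}_0$. Then \[ \left(1+\frac1n\right)^{\frac12-\frac1{4n}+\frac1{8n^2}}<\frac{\Omega_n^2}{\Omega_{n-1}\Omega_{n+1}} \] for every integer $n\ge5$, and \[ \frac{\Omega_n^2}{\Omega_{n-1}\Omega_{n+1}}<\left(1+\frac1n\right)^{\frac12-\frac1{4n}+\frac1{8n^2}+\frac1{48n^3}} \] for every integer $n\ge1$.
   Context: $\Omega_n$ is the volume of the unit ball in $\mathbb{R}^n$ ($\Omega_0=1$); $\Gamma$ is Euler's gamma function. *)

theory Defs
  imports "HOL-Analysis.Analysis"
begin

text \<open>Volume of the unit ball in R^n: pi^(n/2) / Gamma(n/2 + 1).\<close>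
definition Omega :: "nat \<Rightarrow> real" where
  "Omega n = pi powr (real n / 2) / Gamma (real n / 2 + 1)"

end

theory Submission
  imports Defs "HOL-Real_Asymp.Real_Asymp"
begin




definition AL :: "real \<Rightarrow> real" where "AL x = 2*(x + x^3/3 + x^5/5)"
definition BU :: "real \<Rightarrow> real" where "BU x = AL x + 2*x^7/(7*(1-x^2))"

lemma AL_deriv: "(AL has_real_derivative (2*(1 + t^2 + t^4))) (at t)"
  unfolding AL_def[abs_def]
  by (auto intro!: derivative_eq_intros simp: algebra_simps)

lemma T_deriv: assumes "t^2 \<noteq> 1"
  shows "((\<lambda>x. 2*x^7/(7*(1-x^2))) has_real_derivative
      ((2*(7*t^6)) * (7*(1-t^2)) - 2*t^7*(7*(-(2*t)))) / ((7*(1-t^2)) * (7*(1-t^2)))) (at t)"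
proof -
  have a: "((\<lambda>x. 2*x^7) has_real_derivative 2*(7*t^6)) (at t)"
    by (auto intro!: derivative_eq_intros)
  have b: "((\<lambda>x. 7*(1-x^2)) has_real_derivative 7*(-(2*t))) (at t)"
    by (auto intro!: derivative_eq_intros)
  show ?thesis using DERIV_divide[OF a b] assms by simp
qed

lemma t2_lt: "0 \<le> t \<Longrightarrow> t < 1 \<Longrightarrow> (t::real)^2 < 1"
  by (simp add: power_less_one_iff abs_less_iff)

lemma key1: fixes t :: real assumes "0 \<le> t" "t < 1"
  shows "2*(1 + t^2 + t^4) \<le> 2*(1/(1-t^2))"
proof -
  have u: "1 - t^2 > 0" using t2_lt[OF assms] by simp
  have "(1 + t^2 + t^4) * (1 - t^2) = 1 - t^6" by (simp add: algebra_simps power_add[symmetric])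
  also have "\<dots> \<le> 1" by simp
  finally have "(1 + t^2 + t^4) \<le> 1/(1-t^2)" using u by (simp add: le_divide_eq)
  thus ?thesis by simp
qed

lemma key2: fixes t :: real assumes "0 \<le> t" "t < 1"
  shows "2*(1/(1-t^2)) \<le> 2*(1 + t^2 + t^4) +
      ((2*(7*t^6)) * (7*(1-t^2)) - 2*t^7*(7*(-(2*t)))) / ((7*(1-t^2)) * (7*(1-t^2)))"
proof -
  define u where "u = 1 - t^2"
  have u: "u > 0" using t2_lt[OF assms] by (simp add: u_def)
  have t2: "t^2 = 1 - u" by (simp add: u_def)
  have e1: "2*(1/u) = 2*(1 + t^2 + t^4) + 2*t^6/u"
  proof -
    have "(1 + t^2 + t^4) * u = 1 - t^6" unfolding u_def by (simp add: algebra_simps power_add[symmetric])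
    thus ?thesis using u by (simp add: field_simps)
  qed
  have e2: "((2*(7*t^6)) * (7*u) - 2*t^7*(7*(-(2*t)))) / ((7*u) * (7*u)) = 2*t^6/u + 4*t^8/(7*u^2)"
    using u by (simp add: field_simps power2_eq_square) (simp add: power_Suc[symmetric] del: power_Suc)
  have "0 \<le> 4*t^8/(7*u^2)" by simp
  thus ?thesis unfolding u_def[symmetric] e2 e1 by simp
qed

lemma artanh_d: "0 \<le> t \<Longrightarrow> t < 1 \<Longrightarrow> (artanh has_real_derivative (1/(1-t^2))) (at t)"
  by (rule artanh_real_has_field_derivative) simp

lemma artanh_lower:
  fixes x :: real assumes x: "0 \<le> x" "x < 1"
  shows "AL x \<le> 2 * artanh x"
proof -
  let ?f = "\<lambda>t. 2 * artanh t - AL t"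
  have der: "(?f has_real_derivative (2*(1/(1-t^2)) - 2*(1 + t^2 + t^4))) (at t)" if "0 \<le> t" "t < 1" for t :: real
    by (rule DERIV_diff[OF DERIV_cmult[OF artanh_d[OF that]] AL_deriv])
  have "?f 0 \<le> ?f x"
  proof (rule DERIV_nonneg_imp_increasing_open[OF x(1)])
    fix t :: real assume t: "0 < t" "t < x"
    thus "\<exists>y. (?f has_real_derivative y) (at t) \<and> 0 \<le> y"
      using der[of t] key1[of t] x by (intro exI[of _ "2*(1/(1-t^2)) - 2*(1 + t^2 + t^4)"]) auto
  next
    show "continuous_on {0..x} ?f"
      by (rule DERIV_atLeastAtMost_imp_continuous_on) (use der x in force)
  qed
  thus ?thesis by (simp add: AL_def)
qed

lemma artanh_upper:
  fixes x :: real assumes x: "0 \<le> x" "x < 1"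
  shows "2 * artanh x \<le> BU x"
proof -
  let ?f = "\<lambda>t. BU t - 2 * artanh t"
  let ?D = "\<lambda>t. 2*(1 + t^2 + t^4) + ((2*(7*t^6)) * (7*(1-t^2)) - 2*t^7*(7*(-(2*t)))) / ((7*(1-t^2)) * (7*(1-t^2))) - 2*(1/(1-t^2))"
  have der: "(?f has_real_derivative ?D t) (at t)" if "0 \<le> t" "t < 1" for t :: real
  proof -
    have "t^2 \<noteq> 1" using t2_lt[OF that] by simp
    from DERIV_diff[OF DERIV_add[OF AL_deriv T_deriv[OF this]] DERIV_cmult[OF artanh_d[OF that], of 2]]
    show ?thesis unfolding BU_def[abs_def] .
  qed
  have "?f 0 \<le> ?f x"
  proof (rule DERIV_nonneg_imp_increasing_open[OF x(1)])
    fix t :: real assume t: "0 < t" "t < x"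
    thus "\<exists>y. (?f has_real_derivative y) (at t) \<and> 0 \<le> y"
      using der[of t] key2[of t] x by (intro exI[of _ "?D t"]) auto
  next
    show "continuous_on {0..x} ?f"
      by (rule DERIV_atLeastAtMost_imp_continuous_on) (use der x in force)
  qed
  thus ?thesis by (simp add: AL_def BU_def)
qed
lemma ln_bounds:
  fixes m :: real assumes m: "m > 0"
  shows "AL (1/(2*m+1)) \<le> ln (1 + 1/m)" "ln (1 + 1/m) \<le> BU (1/(2*m+1))"
proof -
  let ?x = "1/(2*m+1)"
  have x: "0 \<le> ?x" "?x < 1" using m by (auto simp: field_simps)
  have a: "1 + ?x = (2*m+2)/(2*m+1)" "1 - ?x = (2*m)/(2*m+1)" using m by (simp_all add: field_simps)
  have "(1 + ?x)/(1 - ?x) = (2*m+2)/(2*m)" unfolding a using m by (simp add: divide_simps)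
  also have "\<dots> = 1 + 1/m" using m by (simp add: field_simps)
  finally have "(1 + ?x)/(1 - ?x) = 1 + 1/m" .
  hence e: "2 * artanh ?x = ln (1 + 1/m)" by (simp add: artanh_def)
  show "AL (1/(2*m+1)) \<le> ln (1 + 1/m)" using artanh_lower[OF x] e by simp
  show "ln (1 + 1/m) \<le> BU (1/(2*m+1))" using artanh_upper[OF x] e by simp
qed

definition E1 :: "real \<Rightarrow> real" where "E1 n = 1/2 - 1/(4*n) + 1/(8*n^2)"
definition E2 :: "real \<Rightarrow> real" where "E2 n = 1/2 - 1/(4*n) + 1/(8*n^2) + 1/(48*n^3)"

lemma AL_inv: "a > 0 \<Longrightarrow> AL (1/a) = (30*a^4+10*a^2+6)/(15*a^5)"
  unfolding AL_def power_one_over by (simp add: field_simps) (simp add: power_Suc[symmetric] del: power_Suc)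
lemma BU_inv: "a > 1 \<Longrightarrow> BU (1/a) = (30*a^4+10*a^2+6)/(15*a^5) + 2/(7*a^5*(a^2-1))"
proof -
  assume a: "a > 1"
  have "(1/a)^2 < 1" using a by (simp add: power_one_over)
  hence "1 - (1/a)^2 \<noteq> 0" by simp
  have "2*(1/a)^7/(7*(1-(1/a)^2)) = 2/(7*a^5*(a^2-1))"
    using a unfolding power_one_over by (simp add: field_simps)
  thus ?thesis using a unfolding BU_def by (simp add: AL_inv)
qed
lemma E1_alt: "n > 0 \<Longrightarrow> E1 n = (4*n^2-2*n+1)/(8*n^2)"
  unfolding E1_def by (simp add: field_simps power2_eq_square)
lemma E1_alt2: "n > 0 \<Longrightarrow> 1 - E1 n = (4*n^2+2*n-1)/(8*n^2)"
  unfolding E1_def by (simp add: field_simps power2_eq_square)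
lemma E2_alt: "n > 0 \<Longrightarrow> E2 n = (24*n^3-12*n^2+6*n+1)/(48*n^3)"
  unfolding E2_def by (simp add: field_simps power2_eq_square power3_eq_cube)
lemma E2_alt2: "n > 0 \<Longrightarrow> 1 - E2 n = (24*n^3+12*n^2-6*n-1)/(48*n^3)"
  unfolding E2_def by (simp add: field_simps power2_eq_square power3_eq_cube)



lemma poly_lo:
  fixes n :: real assumes n: "n \<ge> 5"
  shows "AL (1/(2*n+3)) - E1 n * BU (1/(2*n+1)) - (1 - E1 (n+2)) * BU (1/(2*n+5))
     = (let y = n - 5 in 26185968398395855125 * y^0 + 355374022580606103450 * y^1 + 843999468955619441715 * y^2 + 1010456719515251474486 * y^3 + 769692904021305719308 * y^4 + 413165188742342913244 * y^5 + 165222057542758350676 * y^6 + 50882398971107649408 * y^7 + 12315676792693688592 * y^8 + 2370731918078601728 * y^9 + 364912852764155776 * y^10 + 44905397434548736 * y^11 + 4392208468321792 * y^12 + 337252546808832 * y^13 + 19901314900992 * y^14 + 871550910464 * y^15 + 26691162112 * y^16 + 510361600 * y^17 + 4587520 * y^18) / (840 * (n^3*(n+1)*(n+2)^3*(n+3)*(2*n+1)^5*(2*n+3)^5*(2*n+5)^5))"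
proof -
  have pos: "n > 0" "n+1>0" "n+2>0" "n+3>0" "2*n+1>0" "2*n+3>0" "2*n+5>0" using n by auto
  have s1: "(2*n+1)^2 - 1 = 4*n*(n+1)" by (simp add: algebra_simps power2_eq_square)
  have s3: "(2*n+5)^2 - 1 = 4*(n+2)*(n+3)" by (simp add: algebra_simps power2_eq_square)
  have h1: "AL (1/(2*n+3)) = (30*(2*n+3)^4+10*(2*n+3)^2+6)/(15*(2*n+3)^5)" by (rule AL_inv) (use n in simp)
  have h2: "BU (1/(2*n+1)) = (30*(2*n+1)^4+10*(2*n+1)^2+6)/(15*(2*n+1)^5) + 2/(7*(2*n+1)^5*(4*n*(n+1)))" using BU_inv[of "2*n+1"] n s1 by simp
  have h3: "BU (1/(2*n+5)) = (30*(2*n+5)^4+10*(2*n+5)^2+6)/(15*(2*n+5)^5) + 2/(7*(2*n+5)^5*(4*(n+2)*(n+3)))" using BU_inv[of "2*n+5"] n s3 by simp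
  have h4: "E1 n = (4*n^2-2*n+1)/(8*n^2)" by (rule E1_alt) (use n in simp)
  have h5: "1 - E1 (n+2) = (4*(n+2)^2+2*(n+2)-1)/(8*(n+2)^2)" by (rule E1_alt2) (use n in simp)
  have "AL (1/(2*n+3)) - E1 n * BU (1/(2*n+1)) - (1 - E1 (n+2)) * BU (1/(2*n+5))
    = (30*(2*n+3)^4+10*(2*n+3)^2+6)/(15*(2*n+3)^5)
      - ((4*n^2-2*n+1)/(8*n^2) * ((30*(2*n+1)^4+10*(2*n+1)^2+6)/(15*(2*n+1)^5)) + (4*n^2-2*n+1)/(8*n^2) * (2/(7*(2*n+1)^5*(4*n*(n+1)))))
      - ((4*(n+2)^2+2*(n+2)-1)/(8*(n+2)^2) * ((30*(2*n+5)^4+10*(2*n+5)^2+6)/(15*(2*n+5)^5)) + (4*(n+2)^2+2*(n+2)-1)/(8*(n+2)^2) * (2/(7*(2*n+5)^5*(4*(n+2)*(n+3)))))"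
    unfolding h1 h2 h3 h4 h5 distrib_left by (rule refl)
  also have "(30*(2*n+3)^4+10*(2*n+3)^2+6)/(15*(2*n+3)^5) = ((30*(2*n+3)^4+10*(2*n+3)^2+6)*224*n^3*(n+1)*(n+2)^3*(n+3)*(2*n+1)^5*(2*n+5)^5)/(3360*(n^3*(n+1)*(n+2)^3*(n+3)*(2*n+1)^5*(2*n+3)^5*(2*n+5)^5))"
    unfolding times_divide_times_eq apply (subst frac_eq_eq) using pos apply simp using pos apply simp by algebra
  also have "(4*n^2-2*n+1)/(8*n^2) * ((30*(2*n+1)^4+10*(2*n+1)^2+6)/(15*(2*n+1)^5)) = ((4*n^2-2*n+1)*(30*(2*n+1)^4+10*(2*n+1)^2+6)*28*n*(n+1)*(n+2)^3*(n+3)*(2*n+3)^5*(2*n+5)^5)/(3360*(n^3*(n+1)*(n+2)^3*(n+3)*(2*n+1)^5*(2*n+3)^5*(2*n+5)^5))"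
    unfolding times_divide_times_eq apply (subst frac_eq_eq) using pos apply simp using pos apply simp by algebra
  also have "(4*n^2-2*n+1)/(8*n^2) * (2/(7*(2*n+1)^5*(4*n*(n+1)))) = ((4*n^2-2*n+1)*2*15*(n+2)^3*(n+3)*(2*n+3)^5*(2*n+5)^5)/(3360*(n^3*(n+1)*(n+2)^3*(n+3)*(2*n+1)^5*(2*n+3)^5*(2*n+5)^5))"
    unfolding times_divide_times_eq apply (subst frac_eq_eq) using pos apply simp using pos apply simp by algebra
  also have "(4*(n+2)^2+2*(n+2)-1)/(8*(n+2)^2) * ((30*(2*n+5)^4+10*(2*n+5)^2+6)/(15*(2*n+5)^5)) = ((4*(n+2)^2+2*(n+2)-1)*(30*(2*n+5)^4+10*(2*n+5)^2+6)*28*n^3*(n+1)*(n+2)*(n+3)*(2*n+1)^5*(2*n+3)^5)/(3360*(n^3*(n+1)*(n+2)^3*(n+3)*(2*n+1)^5*(2*n+3)^5*(2*n+5)^5))"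
    unfolding times_divide_times_eq apply (subst frac_eq_eq) using pos apply simp using pos apply simp by algebra
  also have "(4*(n+2)^2+2*(n+2)-1)/(8*(n+2)^2) * (2/(7*(2*n+5)^5*(4*(n+2)*(n+3)))) = ((4*(n+2)^2+2*(n+2)-1)*2*15*n^3*(n+1)*(2*n+1)^5*(2*n+3)^5)/(3360*(n^3*(n+1)*(n+2)^3*(n+3)*(2*n+1)^5*(2*n+3)^5*(2*n+5)^5))"
    unfolding times_divide_times_eq apply (subst frac_eq_eq) using pos apply simp using pos apply simp by algebra
  also have "((30*(2*n+3)^4+10*(2*n+3)^2+6)*224*n^3*(n+1)*(n+2)^3*(n+3)*(2*n+1)^5*(2*n+5)^5)/(3360*(n^3*(n+1)*(n+2)^3*(n+3)*(2*n+1)^5*(2*n+3)^5*(2*n+5)^5)) - (((4*n^2-2*n+1)*(30*(2*n+1)^4+10*(2*n+1)^2+6)*28*n*(n+1)*(n+2)^3*(n+3)*(2*n+3)^5*(2*n+5)^5)/(3360*(n^3*(n+1)*(n+2)^3*(n+3)*(2*n+1)^5*(2*n+3)^5*(2*n+5)^5)) + ((4*n^2-2*n+1)*2*15*(n+2)^3*(n+3)*(2*n+3)^5*(2*n+5)^5)/(3360*(n^3*(n+1)*(n+2)^3*(n+3)*(2*n+1)^5*(2*n+3)^5*(2*n+5)^5))) - (((4*(n+2)^2+2*(n+2)-1)*(30*(2*n+5)^4+10*(2*n+5)^2+6)*28*n^3*(n+1)*(n+2)*(n+3)*(2*n+1)^5*(2*n+3)^5)/(3360*(n^3*(n+1)*(n+2)^3*(n+3)*(2*n+1)^5*(2*n+3)^5*(2*n+5)^5))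 + ((4*(n+2)^2+2*(n+2)-1)*2*15*n^3*(n+1)*(2*n+1)^5*(2*n+3)^5)/(3360*(n^3*(n+1)*(n+2)^3*(n+3)*(2*n+1)^5*(2*n+3)^5*(2*n+5)^5)))
     = (((30*(2*n+3)^4+10*(2*n+3)^2+6)*224*n^3*(n+1)*(n+2)^3*(n+3)*(2*n+1)^5*(2*n+5)^5) - (((4*n^2-2*n+1)*(30*(2*n+1)^4+10*(2*n+1)^2+6)*28*n*(n+1)*(n+2)^3*(n+3)*(2*n+3)^5*(2*n+5)^5) + ((4*n^2-2*n+1)*2*15*(n+2)^3*(n+3)*(2*n+3)^5*(2*n+5)^5)) - (((4*(n+2)^2+2*(n+2)-1)*(30*(2*n+5)^4+10*(2*n+5)^2+6)*28*n^3*(n+1)*(n+2)*(n+3)*(2*n+1)^5*(2*n+3)^5) + ((4*(n+2)^2+2*(n+2)-1)*2*15*n^3*(n+1)*(2*n+1)^5*(2*n+3)^5)))/(3360*(n^3*(n+1)*(n+2)^3*(n+3)*(2*n+1)^5*(2*n+3)^5*(2*n+5)^5))"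
    by (simp add: diff_divide_distrib add_divide_distrib)
  also have "((30*(2*n+3)^4+10*(2*n+3)^2+6)*224*n^3*(n+1)*(n+2)^3*(n+3)*(2*n+1)^5*(2*n+5)^5) - (((4*n^2-2*n+1)*(30*(2*n+1)^4+10*(2*n+1)^2+6)*28*n*(n+1)*(n+2)^3*(n+3)*(2*n+3)^5*(2*n+5)^5) + ((4*n^2-2*n+1)*2*15*(n+2)^3*(n+3)*(2*n+3)^5*(2*n+5)^5)) - (((4*(n+2)^2+2*(n+2)-1)*(30*(2*n+5)^4+10*(2*n+5)^2+6)*28*n^3*(n+1)*(n+2)*(n+3)*(2*n+1)^5*(2*n+3)^5) + ((4*(n+2)^2+2*(n+2)-1)*2*15*n^3*(n+1)*(2*n+1)^5*(2*n+3)^5)) = 4 * (let y = n - 5 in 26185968398395855125 * y^0 + 355374022580606103450 * y^1 + 843999468955619441715 * y^2 + 1010456719515251474486 * y^3 + 769692904021305719308 * y^4 + 413165188742342913244 * y^5 + 165222057542758350676 * y^6 + 50882398971107649408 * y^7 + 12315676792693688592 * y^8 + 2370731918078601728 * y^9 + 364912852764155776 * y^10 + 44905397434548736 * y^11 + 4392208468321792 * y^12 + 337252546808832 * y^13 + 19901314900992 * y^14 + 871550910464 * y^15 + 26691162112 * y^16 + 510361600 * y^17 + 4587520 * y^18)"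
    unfolding Let_def by algebra
  finally show ?thesis by simp
qed

lemma poly_up:
  fixes n :: real assumes n: "n \<ge> 1"
  shows "BU (1/(2*n+3)) - E2 n * AL (1/(2*n+1)) - (1 - E2 (n+2)) * AL (1/(2*n+5))
     = - (let y = n - 1 in 112701275630496 * y^0 + 857013023236356 * y^1 + 3038533556841783 * y^2 + 6671327854825032 * y^3 + 10159429157810583 * y^4 + 11388534943813880 * y^5 + 9731764310285610 * y^6 + 6475707601924680 * y^7 + 3397425814536200 * y^8 + 1413525708375840 * y^9 + 466446161238336 * y^10 + 121401722818816 * y^11 + 24619609153536 * y^12 + 3809096985600 * y^13 + 434266714624 * y^14 + 34382555136 * y^15 + 1688143872 * y^16 + 38707200 * y^17) / (1260 * (n^3*(n+1)*(n+2)^3*(n+3)*(2*n+1)^5*(2*n+3)^5*(2*n+5)^5))"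
proof -
  have pos: "n > 0" "n+1>0" "n+2>0" "n+3>0" "2*n+1>0" "2*n+3>0" "2*n+5>0" using n by auto
  have s2: "(2*n+3)^2 - 1 = 4*(n+1)*(n+2)" by (simp add: algebra_simps power2_eq_square)
  have h1: "BU (1/(2*n+3)) = (30*(2*n+3)^4+10*(2*n+3)^2+6)/(15*(2*n+3)^5) + 2/(7*(2*n+3)^5*(4*(n+1)*(n+2)))" using BU_inv[of "2*n+3"] n s2 by simp
  have h2: "AL (1/(2*n+1)) = (30*(2*n+1)^4+10*(2*n+1)^2+6)/(15*(2*n+1)^5)" by (rule AL_inv) (use n in simp)
  have h3: "AL (1/(2*n+5)) = (30*(2*n+5)^4+10*(2*n+5)^2+6)/(15*(2*n+5)^5)" by (rule AL_inv) (use n in simp)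
  have h4: "E2 n = (24*n^3-12*n^2+6*n+1)/(48*n^3)" by (rule E2_alt) (use n in simp)
  have h5: "1 - E2 (n+2) = (24*(n+2)^3+12*(n+2)^2-6*(n+2)-1)/(48*(n+2)^3)" by (rule E2_alt2) (use n in simp)
  have "BU (1/(2*n+3)) - E2 n * AL (1/(2*n+1)) - (1 - E2 (n+2)) * AL (1/(2*n+5))
    = ((30*(2*n+3)^4+10*(2*n+3)^2+6)/(15*(2*n+3)^5) + 2/(7*(2*n+3)^5*(4*(n+1)*(n+2))))
      - (24*n^3-12*n^2+6*n+1)/(48*n^3) * ((30*(2*n+1)^4+10*(2*n+1)^2+6)/(15*(2*n+1)^5))
      - (24*(n+2)^3+12*(n+2)^2-6*(n+2)-1)/(48*(n+2)^3) * ((30*(2*n+5)^4+10*(2*n+5)^2+6)/(15*(2*n+5)^5))"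
    unfolding h1 h2 h3 h4 h5 by (rule refl)
  also have "(30*(2*n+3)^4+10*(2*n+3)^2+6)/(15*(2*n+3)^5) = ((30*(2*n+3)^4+10*(2*n+3)^2+6)*336*n^3*(n+1)*(n+2)^3*(n+3)*(2*n+1)^5*(2*n+5)^5)/(5040*(n^3*(n+1)*(n+2)^3*(n+3)*(2*n+1)^5*(2*n+3)^5*(2*n+5)^5))"
    unfolding times_divide_times_eq apply (subst frac_eq_eq) using pos apply simp using pos apply simp by algebra
  also have "2/(7*(2*n+3)^5*(4*(n+1)*(n+2))) = (360*n^3*(n+2)^2*(n+3)*(2*n+1)^5*(2*n+5)^5)/(5040*(n^3*(n+1)*(n+2)^3*(n+3)*(2*n+1)^5*(2*n+3)^5*(2*n+5)^5))"
    unfolding times_divide_times_eq apply (subst frac_eq_eq) using pos apply simp using pos apply simp by algebra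
  also have "(24*n^3-12*n^2+6*n+1)/(48*n^3) * ((30*(2*n+1)^4+10*(2*n+1)^2+6)/(15*(2*n+1)^5)) = ((24*n^3-12*n^2+6*n+1)*(30*(2*n+1)^4+10*(2*n+1)^2+6)*7*(n+1)*(n+2)^3*(n+3)*(2*n+3)^5*(2*n+5)^5)/(5040*(n^3*(n+1)*(n+2)^3*(n+3)*(2*n+1)^5*(2*n+3)^5*(2*n+5)^5))"
    unfolding times_divide_times_eq apply (subst frac_eq_eq) using pos apply simp using pos apply simp by algebra
  also have "(24*(n+2)^3+12*(n+2)^2-6*(n+2)-1)/(48*(n+2)^3) * ((30*(2*n+5)^4+10*(2*n+5)^2+6)/(15*(2*n+5)^5)) = ((24*(n+2)^3+12*(n+2)^2-6*(n+2)-1)*(30*(2*n+5)^4+10*(2*n+5)^2+6)*7*n^3*(n+1)*(n+3)*(2*n+1)^5*(2*n+3)^5)/(5040*(n^3*(n+1)*(n+2)^3*(n+3)*(2*n+1)^5*(2*n+3)^5*(2*n+5)^5))"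
    unfolding times_divide_times_eq apply (subst frac_eq_eq) using pos apply simp using pos apply simp by algebra
  also have "(((30*(2*n+3)^4+10*(2*n+3)^2+6)*336*n^3*(n+1)*(n+2)^3*(n+3)*(2*n+1)^5*(2*n+5)^5)/(5040*(n^3*(n+1)*(n+2)^3*(n+3)*(2*n+1)^5*(2*n+3)^5*(2*n+5)^5)) + (360*n^3*(n+2)^2*(n+3)*(2*n+1)^5*(2*n+5)^5)/(5040*(n^3*(n+1)*(n+2)^3*(n+3)*(2*n+1)^5*(2*n+3)^5*(2*n+5)^5))) - ((24*n^3-12*n^2+6*n+1)*(30*(2*n+1)^4+10*(2*n+1)^2+6)*7*(n+1)*(n+2)^3*(n+3)*(2*n+3)^5*(2*n+5)^5)/(5040*(n^3*(n+1)*(n+2)^3*(n+3)*(2*n+1)^5*(2*n+3)^5*(2*n+5)^5)) - ((24*(n+2)^3+12*(n+2)^2-6*(n+2)-1)*(30*(2*n+5)^4+10*(2*n+5)^2+6)*7*n^3*(n+1)*(n+3)*(2*n+1)^5*(2*n+3)^5)/(5040*(n^3*(n+1)*(n+2)^3*(n+3)*(2*n+1)^5*(2*n+3)^5*(2*n+5)^5))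
     = (((30*(2*n+3)^4+10*(2*n+3)^2+6)*336*n^3*(n+1)*(n+2)^3*(n+3)*(2*n+1)^5*(2*n+5)^5) + (360*n^3*(n+2)^2*(n+3)*(2*n+1)^5*(2*n+5)^5) - ((24*n^3-12*n^2+6*n+1)*(30*(2*n+1)^4+10*(2*n+1)^2+6)*7*(n+1)*(n+2)^3*(n+3)*(2*n+3)^5*(2*n+5)^5) - ((24*(n+2)^3+12*(n+2)^2-6*(n+2)-1)*(30*(2*n+5)^4+10*(2*n+5)^2+6)*7*n^3*(n+1)*(n+3)*(2*n+1)^5*(2*n+3)^5))/(5040*(n^3*(n+1)*(n+2)^3*(n+3)*(2*n+1)^5*(2*n+3)^5*(2*n+5)^5))"
    by (simp add: diff_divide_distrib add_divide_distrib)
  also have "((30*(2*n+3)^4+10*(2*n+3)^2+6)*336*n^3*(n+1)*(n+2)^3*(n+3)*(2*n+1)^5*(2*n+5)^5) + (360*n^3*(n+2)^2*(n+3)*(2*n+1)^5*(2*n+5)^5) - ((24*n^3-12*n^2+6*n+1)*(30*(2*n+1)^4+10*(2*n+1)^2+6)*7*(n+1)*(n+2)^3*(n+3)*(2*n+3)^5*(2*n+5)^5) - ((24*(n+2)^3+12*(n+2)^2-6*(n+2)-1)*(30*(2*n+5)^4+10*(2*n+5)^2+6)*7*n^3*(n+1)*(n+3)*(2*n+1)^5*(2*n+3)^5) = - 4 * (let y = n - 1 in 112701275630496 * y^0 + 857013023236356 * y^1 + 3038533556841783 * y^2 + 6671327854825032 * y^3 + 10159429157810583 * y^4 + 11388534943813880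 * y^5 + 9731764310285610 * y^6 + 6475707601924680 * y^7 + 3397425814536200 * y^8 + 1413525708375840 * y^9 + 466446161238336 * y^10 + 121401722818816 * y^11 + 24619609153536 * y^12 + 3809096985600 * y^13 + 434266714624 * y^14 + 34382555136 * y^15 + 1688143872 * y^16 + 38707200 * y^17)"
    unfolding Let_def by algebra
  finally show ?thesis by simp
qed

lemma Qlo_pos: "y \<ge> 0 \<Longrightarrow> (0::real) < 26185968398395855125 * y^0 + 355374022580606103450 * y^1 + 843999468955619441715 * y^2 + 1010456719515251474486 * y^3 + 769692904021305719308 * y^4 + 413165188742342913244 * y^5 + 165222057542758350676 * y^6 + 50882398971107649408 * y^7 + 12315676792693688592 * y^8 + 2370731918078601728 * y^9 + 364912852764155776 * y^10 + 44905397434548736 * y^11 + 4392208468321792 * y^12 + 337252546808832 * y^13 + 19901314900992 * y^14 + 871550910464 * y^15 + 26691162112 * y^16 + 510361600 * y^17 + 4587520 * y^18"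
  by (intro add_pos_nonneg mult_nonneg_nonneg; simp)
lemma Qup_pos: "y \<ge> 0 \<Longrightarrow> (0::real) < 112701275630496 * y^0 + 857013023236356 * y^1 + 3038533556841783 * y^2 + 6671327854825032 * y^3 + 10159429157810583 * y^4 + 11388534943813880 * y^5 + 9731764310285610 * y^6 + 6475707601924680 * y^7 + 3397425814536200 * y^8 + 1413525708375840 * y^9 + 466446161238336 * y^10 + 121401722818816 * y^11 + 24619609153536 * y^12 + 3809096985600 * y^13 + 434266714624 * y^14 + 34382555136 * y^15 + 1688143872 * y^16 + 38707200 * y^17"
  by (intro add_pos_nonneg mult_nonneg_nonneg; simp)



lemma Omega_pos: "Omega n > 0"
  unfolding Omega_def by (intro divide_pos_pos Gamma_real_pos) auto

lemma Omega_plus2: "Omega (n+2) = Omega n * (2*pi/(real n + 2))"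
proof -
  have g0: "Gamma (real n / 2 + 1 + 1) = (real n / 2 + 1) * Gamma (real n / 2 + 1)"
    by (rule Gamma_plus1) (auto simp: nonpos_Ints_def)
  have eq: "real (n+2)/2+1 = real n / 2 + 1 + 1" by (simp add: field_simps)
  have g: "Gamma (real (n+2) / 2 + 1) = (real n / 2 + 1) * Gamma (real n / 2 + 1)" by (simp only: eq g0)
  have p: "pi powr (real (n+2) / 2) = pi powr (real n / 2) * pi"
    by (simp add: add_divide_distrib powr_add)
  have "Omega (n+2) = pi powr (real n / 2) * pi / ((real n / 2 + 1) * Gamma (real n / 2 + 1))"
    unfolding Omega_def p g by simp
  also have "\<dots> = Omega n * (2*pi/(real n + 2))"
    unfolding Omega_def by (simp add: field_simps)
  finally show ?thesis .
qed

lemma Omega_logconv: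
  assumes n: "n \<ge> 1" shows "Omega (n-1) * Omega (n+1) \<le> Omega n ^ 2"
proof -
  let ?a = "real (n-1) / 2 + 1" and ?b = "real (n+1) / 2 + 1" and ?c = "real n / 2 + 1"
  have rn: "real (n-1) = real n - 1" using n by simp
  have n': "real n \<ge> 1" using n by simp
  have c: "?c = (1 - 1/2) *\<^sub>R ?a + (1/2) *\<^sub>R ?b" using rn by (simp add: field_simps)
  have ha: "?a \<in> {0<..}" and hb: "?b \<in> {0<..}" by (auto simp: rn field_simps)
  have cv: "(ln \<circ> Gamma) ((1 - 1/2) *\<^sub>R ?a + (1/2) *\<^sub>R ?b) \<le> (1 - 1/2) * (ln \<circ> Gamma) ?a + (1/2) * (ln \<circ> Gamma) ?b"
    by (rule convex_onD[OF log_convex_Gamma_real]) (use ha hb in auto)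
  have "ln (Gamma ?c) \<le> (1 - 1/2) * ln (Gamma ?a) + (1/2) * ln (Gamma ?b)"
    using cv unfolding c[symmetric] by simp
  hence "2 * ln (Gamma ?c) \<le> ln (Gamma ?a) + ln (Gamma ?b)" by simp
  moreover have pos: "Gamma ?a > 0" "Gamma ?b > 0" "Gamma ?c > 0" using ha hb by auto
  have l1: "ln (Gamma ?c * Gamma ?c) = 2 * ln (Gamma ?c)" using pos(3) by (simp add: ln_mult)
  have l2: "ln (Gamma ?a * Gamma ?b) = ln (Gamma ?a) + ln (Gamma ?b)" using pos(1,2) by (rule ln_mult_pos)
  ultimately have "ln (Gamma ?c * Gamma ?c) \<le> ln (Gamma ?a * Gamma ?b)" unfolding l1 l2 by linarith
  hence gam: "Gamma ?c ^ 2 \<le> Gamma ?a * Gamma ?b"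
    using pos by (simp add: power2_eq_square)
  have pp: "pi powr (real (n-1) / 2) * pi powr (real (n+1) / 2) = (pi powr (real n / 2))^2"
    using rn by (simp add: powr_add[symmetric] powr_mult_base power2_eq_square add_divide_distrib[symmetric]
         diff_divide_distrib[symmetric]) 
  have "Omega (n-1) * Omega (n+1) = (pi powr (real n / 2))^2 / (Gamma ?a * Gamma ?b)"
    unfolding Omega_def pp[symmetric] by simp
  also have "\<dots> \<le> (pi powr (real n / 2))^2 / Gamma ?c ^ 2"
    by (rule divide_left_mono[OF gam _ mult_pos_pos[OF mult_pos_pos[OF pos(1) pos(2)] zero_less_power[OF pos(3)]]]) simp
  also have "\<dots> = Omega n ^ 2" unfolding Omega_def by (simp add: power_divide)
  finally show ?thesis .
qed

definition R :: "nat \<Rightarrow> real" where "R n = Omega n ^ 2 / (Omega (n - 1) * Omega (n + 1))"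

lemma R_ge1: "n \<ge> 1 \<Longrightarrow> R n \<ge> 1"
  unfolding R_def using Omega_logconv[of n] Omega_pos[of "n-1"] Omega_pos[of "n+1"]
  by (simp add: field_simps)

lemma R_mult: assumes n: "n \<ge> 1" shows "R n * R (n+1) = (real n + 2)/(real n + 1)"
proof -
  have e1: "Omega (n+1) = Omega (n-1) * (2*pi/(real n + 1))"
    using Omega_plus2[of "n-1"] n by (simp add: of_nat_diff)
  have e2: "Omega (n+2) = Omega n * (2*pi/(real n + 2))" by (rule Omega_plus2)
  have p: "Omega (n-1) > 0" "Omega n > 0" "Omega (n+1) > 0" "Omega (n+2) > 0" by (rule Omega_pos)+
  have "R n * R (n+1) = Omega n * Omega (n+1) / (Omega (n-1) * Omega (n+2))"
    unfolding R_def using p by (simp add: field_simps power2_eq_square)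
  also have "\<dots> = Omega n * (Omega (n-1) * (2*pi/(real n + 1))) / (Omega (n-1) * (Omega n * (2*pi/(real n + 2))))"
    by (simp only: e1 e2)
  also have "\<dots> = (2*pi/(real n + 1)) / (2*pi/(real n + 2))"
    using p by simp
  also have "\<dots> = (real n + 2)/(real n + 1)"
    using pi_gt_zero by (simp add: divide_simps) (simp add: algebra_simps)?
  finally show ?thesis .
qed

lemma R_tendsto: "R \<longlonglongrightarrow> 1"
proof (rule tendsto_sandwich[of "\<lambda>_. 1" _ _ "\<lambda>n. (real n + 2)/(real n + 1)"])
  show "\<forall>\<^sub>F n in sequentially. 1 \<le> R n"
    using eventually_ge_at_top[of 1] by eventually_elim (rule R_ge1)
  show "\<forall>\<^sub>F n in sequentially. R n \<le> (real n + 2)/(real n + 1)"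
    using eventually_ge_at_top[of 1]
  proof eventually_elim
    case (elim n)
    define c where "c = (real n + 2)/(real n + 1)"
    have c0: "c \<ge> 0" unfolding c_def by simp
    have r1: "R (n+1) \<ge> 1" by (rule R_ge1) simp
    have "R n * R (n+1) = c" using R_mult[OF elim] unfolding c_def .
    hence "R n = c / R (n+1)" using r1 by (simp add: eq_divide_eq)
    also have "\<dots> \<le> c" using r1 c0 mult_left_mono[OF r1 c0] by (simp add: divide_le_eq)
    finally show ?case unfolding c_def .
  qed
  show "(\<lambda>_. 1) \<longlonglongrightarrow> (1::real)" by simp
  show "(\<lambda>n. (real n + 2)/(real n + 1)) \<longlonglongrightarrow> 1" by real_asymp
qed


lemma pows: fixes n :: real assumes "n \<ge> 1" shows "n \<le> n^2" "n^2 \<le> n^3"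
proof -
  show "n \<le> n^2" using power_increasing[of 1 2 n] assms by simp
  show "n^2 \<le> n^3" using power_increasing[of 2 3 n] assms by simp
qed

lemma aux1: fixes k :: real assumes "k \<ge> 1" shows "0 \<le> 4*k^2+2*k-1"
  using pows[OF assms] assms by linarith
lemma aux2: fixes k :: real assumes "k \<ge> 1" shows "0 \<le> 24*k^3+12*k^2-6*k-1"
  using pows[OF assms] assms by linarith

lemma E1_nonneg: fixes n :: real assumes "n \<ge> 1" shows "0 \<le> E1 n" "0 \<le> 1 - E1 (n+2)"
proof -
  have "0 \<le> 4*n^2-2*n+1" using pows[OF assms] assms by linarith
  thus "0 \<le> E1 n" using assms by (simp add: E1_alt)
  have k: "n + 2 \<ge> 1" using assms by simp
  have "0 \<le> 4*(n+2)^2+2*(n+2)-1" using aux1[OF k] .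
  thus "0 \<le> 1 - E1 (n+2)" using assms E1_alt2[of "n+2"] by simp
qed

lemma E2_nonneg: fixes n :: real assumes "n \<ge> 1" shows "0 \<le> E2 n" "0 \<le> 1 - E2 (n+2)"
proof -
  have "0 \<le> 24*n^3-12*n^2+6*n+1" using pows[OF assms] assms by linarith
  thus "0 \<le> E2 n" using assms by (simp add: E2_alt)
  have k: "n + 2 \<ge> 1" using assms by simp
  have "0 \<le> 24*(n+2)^3+12*(n+2)^2-6*(n+2)-1" using aux2[OF k] .
  thus "0 \<le> 1 - E2 (n+2)" using assms E2_alt2[of "n+2"] by simp
qed

definition LL :: "nat \<Rightarrow> real" where "LL m = ln (1 + 1 / real m)"

lemma R_pos: "m \<ge> 1 \<Longrightarrow> R m > 0"
  using R_ge1[of m] by simp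

lemma lnR_sum: assumes "m \<ge> 1" shows "ln (R m) + ln (R (m+1)) = LL (m+1)"
proof -
  have "ln (R m) + ln (R (m+1)) = ln (R m * R (m+1))"
    using R_pos[of m] R_pos[of "m+1"] assms by (simp add: ln_mult_pos)
  also have "R m * R (m+1) = 1 + 1 / real (m+1)"
    using R_mult[OF assms] by (simp add: field_simps)
  finally show ?thesis unfolding LL_def .
qed

lemma diff_formula:
  assumes "m \<ge> 1"
  shows "(ln (R m) - e m * LL m) - (ln (R (m+2)) - e (m+2) * LL (m+2))
       = LL (m+1) - e m * LL m - (1 - e (m+2)) * LL (m+2)"
  using lnR_sum[OF assms] lnR_sum[of "m+1"] assms by (simp add: algebra_simps)

lemma LL_bounds: assumes "m \<ge> 1"
  shows "AL (1/(2*real m+1)) \<le> LL m" "LL m \<le> BU (1/(2*real m+1))"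
  using ln_bounds[of "real m"] assms unfolding LL_def by auto

lemma LL_shift:
  "LL (m+1) = ln (1 + 1/(real m + 1))" "LL (m+2) = ln (1 + 1/(real m + 2))"
  unfolding LL_def by (simp_all add: add.commute)

lemma h_lo: fixes m :: nat assumes m: "m \<ge> 5"
  shows "LL (m+1) - E1 (real m) * LL m - (1 - E1 (real (m+2))) * LL (m+2) > 0"
proof -
  define n where "n = real m"
  have n: "n \<ge> 5" using m unfolding n_def by simp
  have e3: "2*(n+1)+1 = 2*n+3" and e5: "2*(n+2)+1 = 2*n+5" by simp_all
  have b1: "AL (1/(2*n+3)) \<le> LL (m+1)"
    using ln_bounds(1)[of "n+1"] n unfolding LL_shift n_def[symmetric] e3 by simp
  have b0: "LL m \<le> BU (1/(2*n+1))" using LL_bounds(2)[of m] m unfolding n_def by simp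
  have b2: "LL (m+2) \<le> BU (1/(2*n+5))"
    using ln_bounds(2)[of "n+2"] n unfolding LL_shift n_def[symmetric] e5 by simp
  have en: "0 \<le> E1 n" "0 \<le> 1 - E1 (n+2)" using E1_nonneg[of n] n by auto
  have "AL (1/(2*n+3)) - E1 n * BU (1/(2*n+1)) - (1 - E1 (n+2)) * BU (1/(2*n+5))
      \<le> LL (m+1) - E1 n * LL m - (1 - E1 (n+2)) * LL (m+2)"
    using b1 mult_left_mono[OF b0 en(1)] mult_left_mono[OF b2 en(2)] by linarith
  moreover have "0 < AL (1/(2*n+3)) - E1 n * BU (1/(2*n+1)) - (1 - E1 (n+2)) * BU (1/(2*n+5))"
  proof -
    have y: "n - 5 \<ge> 0" using n by simp
    have D: "0 < (840 * (n^3*(n+1)*(n+2)^3*(n+3)*(2*n+1)^5*(2*n+3)^5*(2*n+5)^5))" using n by simp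
    show ?thesis unfolding poly_lo[OF n] Let_def using Qlo_pos[OF y] D by (rule divide_pos_pos)
  qed
  moreover have r2: "real (m+2) = n + 2" unfolding n_def by simp
  ultimately show ?thesis unfolding r2 n_def[symmetric] by linarith
qed

lemma h_up: fixes m :: nat assumes m: "m \<ge> 1"
  shows "LL (m+1) - E2 (real m) * LL m - (1 - E2 (real (m+2))) * LL (m+2) < 0"
proof -
  define n where "n = real m"
  have n: "n \<ge> 1" using m unfolding n_def by simp
  have e3: "2*(n+1)+1 = 2*n+3" and e5: "2*(n+2)+1 = 2*n+5" by simp_all
  have b1: "LL (m+1) \<le> BU (1/(2*n+3))"
    using ln_bounds(2)[of "n+1"] n unfolding LL_shift n_def[symmetric] e3 by simp
  have b0: "AL (1/(2*n+1)) \<le> LL m" using LL_bounds(1)[of m] m unfolding n_def by simp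
  have b2: "AL (1/(2*n+5)) \<le> LL (m+2)"
    using ln_bounds(1)[of "n+2"] n unfolding LL_shift n_def[symmetric] e5 by simp
  have en: "0 \<le> E2 n" "0 \<le> 1 - E2 (n+2)" using E2_nonneg[of n] n by auto
  have "LL (m+1) - E2 n * LL m - (1 - E2 (n+2)) * LL (m+2) \<le>
        BU (1/(2*n+3)) - E2 n * AL (1/(2*n+1)) - (1 - E2 (n+2)) * AL (1/(2*n+5))"
    using b1 mult_left_mono[OF b0 en(1)] mult_left_mono[OF b2 en(2)] by linarith
  moreover have "BU (1/(2*n+3)) - E2 n * AL (1/(2*n+1)) - (1 - E2 (n+2)) * AL (1/(2*n+5)) < 0"
  proof -
    have y: "n - 1 \<ge> 0" using n by simp
    have D: "0 < (1260 * (n^3*(n+1)*(n+2)^3*(n+3)*(2*n+1)^5*(2*n+3)^5*(2*n+5)^5))" using n by simp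
    show ?thesis unfolding poly_up[OF n] Let_def using Qup_pos[OF y] D
      by (simp add: divide_neg_pos)
  qed
  moreover have r2: "real (m+2) = n + 2" unfolding n_def by simp
  ultimately show ?thesis unfolding r2 n_def[symmetric] by linarith
qed

lemma pos_from_diff:
  fixes G :: "nat \<Rightarrow> real"
  assumes lim: "G \<longlonglongrightarrow> 0" and d: "\<And>m. m \<ge> N \<Longrightarrow> G m - G (m+2) > 0" and n: "n \<ge> N"
  shows "G n > 0"
proof -
  define s where "s k = G (n + 2*k)" for k
  have sm: "strict_mono (\<lambda>k::nat. n + 2*k)" by (rule strict_monoI) simp
  have "(G \<circ> (\<lambda>k. n + 2*k)) \<longlonglongrightarrow> 0" by (rule LIMSEQ_subseq_LIMSEQ[OF lim sm])
  hence sl: "s \<longlonglongrightarrow> 0" unfolding s_def comp_def .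
  have "decseq s"
  proof (rule decseq_SucI)
    fix k have "G (n + 2*k) - G (n + 2*k + 2) > 0" using d[of "n+2*k"] n by simp
    thus "s (Suc k) \<le> s k" unfolding s_def by (simp add: algebra_simps)
  qed
  hence "0 \<le> s 1" using decseq_ge[OF _ sl] by blast
  moreover have "s 1 < s 0" using d[OF n] unfolding s_def by simp
  ultimately show ?thesis unfolding s_def by simp
qed

lemma g_tendsto:
  assumes "((\<lambda>m. e (real m)) \<longlongrightarrow> c) sequentially"
  shows "(\<lambda>m. ln (R m) - e (real m) * LL m) \<longlonglongrightarrow> 0"
proof -
  have a: "(\<lambda>m. ln (R m)) \<longlonglongrightarrow> ln 1" by (rule tendsto_ln[OF R_tendsto]) simp
  have b: "LL \<longlonglongrightarrow> 0" unfolding LL_def by real_asymp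
  have "(\<lambda>m. ln (R m) - e (real m) * LL m) \<longlonglongrightarrow> ln 1 - c * 0"
    by (intro tendsto_intros a assms b)
  thus ?thesis by simp
qed


lemma E1_lim: "((\<lambda>m. E1 (real m)) \<longlongrightarrow> 1/2) sequentially"
  unfolding E1_def by real_asymp
lemma E2_lim: "((\<lambda>m. E2 (real m)) \<longlongrightarrow> 1/2) sequentially"
  unfolding E2_def by real_asymp

lemma g1_pos: assumes n: "n \<ge> (5::nat)" shows "ln (R n) - E1 (real n) * LL n > 0"
proof (rule pos_from_diff[OF g_tendsto[OF E1_lim] _ n])
  fix m :: nat assume "m \<ge> 5"
  thus "(ln (R m) - E1 (real m) * LL m) - (ln (R (m+2)) - E1 (real (m+2)) * LL (m+2)) > 0"
    using diff_formula[of m "\<lambda>m. E1 (real m)"] h_lo[of m] by simp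
qed

lemma g2_neg: assumes n: "n \<ge> (1::nat)" shows "ln (R n) - E2 (real n) * LL n < 0"
proof -
  have lim: "(\<lambda>m. - (ln (R m) - E2 (real m) * LL m)) \<longlonglongrightarrow> 0"
    using tendsto_minus[OF g_tendsto[OF E2_lim]] by simp
  have "- (ln (R n) - E2 (real n) * LL n) > 0"
  proof (rule pos_from_diff[OF lim _ n])
    fix m :: nat assume "m \<ge> 1"
    thus "- (ln (R m) - E2 (real m) * LL m) - - (ln (R (m+2)) - E2 (real (m+2)) * LL (m+2)) > 0"
      using diff_formula[of m "\<lambda>m. E2 (real m)"] h_up[of m] by simp
  qed
  thus ?thesis by simp
qed

lemma powr_exp_ln: fixes x a :: real assumes "x > 0" shows "x powr a = exp (a * ln x)"
  using assms by (simp add: powr_def)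

lemma base_pos: "0 < 1 + 1 / real n"
  by (intro add_pos_nonneg) auto

lemma low_final: assumes n: "n \<ge> (5::nat)" shows "(1 + 1/real n) powr E1 (real n) < R n"
proof -
  have "E1 (real n) * LL n < ln (R n)" using g1_pos[OF n] by simp
  hence "exp (E1 (real n) * LL n) < exp (ln (R n))" by (rule exp_less_mono)
  also have "exp (ln (R n)) = R n" using R_pos[of n] n by simp
  also have "exp (E1 (real n) * LL n) = (1 + 1/real n) powr E1 (real n)"
    unfolding LL_def by (rule powr_exp_ln[symmetric]) (rule base_pos)
  finally show ?thesis .
qed

lemma up_final: assumes n: "n \<ge> (1::nat)" shows "R n < (1 + 1/real n) powr E2 (real n)"
proof -
  have "ln (R n) < E2 (real n) * LL n" using g2_neg[OF n] by simp
  hence "exp (ln (R n)) < exp (E2 (real n) * LL n)" by (rule exp_less_mono)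
  also have "exp (ln (R n)) = R n" using R_pos[of n] n by simp
  also have "exp (E2 (real n) * LL n) = (1 + 1/real n) powr E2 (real n)"
    unfolding LL_def by (rule powr_exp_ln[symmetric]) (rule base_pos)
  finally show ?thesis .
qed

theorem theorem18:
  shows "(\<forall>n::nat. n \<ge> 5 \<longrightarrow>
           (1 + 1 / real n) powr (1/2 - 1 / (4 * real n) + 1 / (8 * real n ^ 2))
             < Omega n ^ 2 / (Omega (n - 1) * Omega (n + 1))) \<and>
         (\<forall>n::nat. n \<ge> 1 \<longrightarrow>
           Omega n ^ 2 / (Omega (n - 1) * Omega (n + 1))
             < (1 + 1 / real n) powr (1/2 - 1 / (4 * real n) + 1 / (8 * real n ^ 2) + 1 / (48 * real n ^ 3)))"
proof (intro conjI allI impI)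
  fix n :: nat assume n: "n \<ge> 5"
  show "(1 + 1 / real n) powr (1/2 - 1 / (4 * real n) + 1 / (8 * real n ^ 2))
             < Omega n ^ 2 / (Omega (n - 1) * Omega (n + 1))"
    using low_final[OF n] unfolding E1_def R_def .
next
  fix n :: nat assume n: "n \<ge> 1"
  show "Omega n ^ 2 / (Omega (n - 1) * Omega (n + 1))
             < (1 + 1 / real n) powr (1/2 - 1 / (4 * real n) + 1 / (8 * real n ^ 2) + 1 / (48 * real n ^ 3))"
    using up_final[OF n] unfolding E2_def R_def .
qed

end
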